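(* Let $H_n=\sum_{j=1}^n\frac1j$, let $\gamma$ be the Euler–Mascheroni constant, $\Gamma$ the gamma function, and $z^{\overline{k}} = z(z+1) \cdots (z + k -1)$ the rising factorial. Then: (i) for $k \in \{1 ,2, \ldots\}$, $$\sum_{n=1}^\infty (-1)^n \left(H_n - \log\sqrt[k]{n^{\overline{k}}} - \gamma \right) = \frac{\gamma}{2} - \frac{\log(\pi)}{2k} + \frac{1}{k}\log\Gamma\left(\frac{k+1}{2}\right);$$ (ii) for $x > 0$, $$\sum_{n=1}^\infty (-1)^n \left(H_n - \log(n + x -1) - \gamma \right) = \frac{\gamma}{2} + \log\left[\frac{\Gamma\left(\frac{x + 1}{2}\right)}{\Gamma \left(\frac{x}{2}\right)} \right].$$ *)

theory Defs
  imports "HOL-Analysis.Analysis"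
begin

end

theory Submission
  imports Defs "HOL-Real_Asymp.Real_Asymp"
begin

lemma even_sums:
  fixes f :: "nat \<Rightarrow> real"
  assumes S: "(\<lambda>N. sum f {..<2*N}) \<longlonglongrightarrow> L" and f: "f \<longlonglongrightarrow> 0"
  shows "f sums L"
proof -
  have "(\<lambda>N. f (2*N)) \<longlonglongrightarrow> 0"
    using LIMSEQ_subseq_LIMSEQ[OF f, of "\<lambda>N. 2*N"] by (simp add: strict_mono_def o_def)
  from tendsto_add[OF S this] have S2: "(\<lambda>N. sum f {..<Suc (2*N)}) \<longlonglongrightarrow> L" by simp
  show ?thesis unfolding sums_def
  proof (rule LIMSEQ_I)
    fix r :: real assume r: "0 < r"
    obtain N1 where N1: "\<And>n. n \<ge> N1 \<Longrightarrow> norm (sum f {..<2*n} - L) < r"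
      using LIMSEQ_D[OF S r] by blast
    obtain N2 where N2: "\<And>n. n \<ge> N2 \<Longrightarrow> norm (sum f {..<Suc (2*n)} - L) < r"
      using LIMSEQ_D[OF S2 r] by blast
    show "\<exists>no. \<forall>n\<ge>no. norm (sum f {..<n} - L) < r"
    proof (intro exI allI impI)
      fix n assume n: "n \<ge> 2 * (N1 + N2)"
      show "norm (sum f {..<n} - L) < r"
      proof (cases "even n")
        case True
        then obtain m where m: "n = 2*m" by auto
        with n have "m \<ge> N1" by auto
        with N1 m show ?thesis by simp
      next
        case False
        then obtain m where m: "n = Suc (2*m)" by (metis oddE Suc_eq_plus1)
        with n have "m \<ge> N2" by auto
        with N2 m show ?thesis by simp
      qed
    qed
  qed
qed

lemma lim1: "(\<lambda>N. ln (b + real N) - ln (a + real N)) \<longlonglongrightarrow> 0"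
  by real_asymp

definition FF :: "real \<Rightarrow> nat \<Rightarrow> real" where
  "FF x n = (-1) ^ Suc n * (harm (Suc n) - ln (real (Suc n) + x - 1) - euler_mascheroni)"

lemma FF_tendsto: assumes x: "x > 0" shows "FF x \<longlonglongrightarrow> 0"
proof -
  have h1: "(\<lambda>n. harm (Suc n) - ln (real (Suc n)) :: real) \<longlonglongrightarrow> euler_mascheroni"
    using LIMSEQ_Suc[OF euler_mascheroni_LIMSEQ] by simp
  have h2: "(\<lambda>n. ln (real n + x) - ln (real n + 1)) \<longlonglongrightarrow> 0"
    using x by real_asymp
  have "(\<lambda>n. (harm (Suc n) - ln (real (Suc n))) - (ln (real n + x) - ln (real n + 1)) - euler_mascheroni) \<longlonglongrightarrow> euler_mascheroni - 0 - euler_mascheroni"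
    by (intro tendsto_intros h1 h2)
  hence h3: "(\<lambda>n. harm (Suc n) - ln (real (Suc n) + x - 1) - euler_mascheroni) \<longlonglongrightarrow> 0"
    by (simp add: add.commute)
  show ?thesis
    by (rule tendsto_norm_zero_cancel) (use tendsto_norm_zero[OF h3] in \<open>simp add: FF_def abs_mult\<close>)
qed

lemma FF_even: assumes x: "x > 0"
  shows "sum (FF x) {..<2*N} = harm N / 2 - ln (pochhammer ((x+1)/2) N) + ln (pochhammer (x/2) N)"
proof (induction N)
  case 0
  then show ?case by (simp add: harm_def)
next
  case (Suc N)
  have e: "{..<2 * Suc N} = insert (Suc (2*N)) (insert (2*N) {..<2*N})" by auto
  have p1: "pochhammer ((x+1)/2) N > 0" "pochhammer (x/2) N > 0"
    using x by (auto intro!: pochhammer_pos)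
  have p2: "(x+1)/2 + real N > 0" "x/2 + real N > 0" using x by (auto intro: add_pos_nonneg)
  have s1: "sum (FF x) {..<2 * Suc N} = sum (FF x) {..<2*N} + (FF x (2*N) + FF x (Suc (2*N)))"
    by (simp add: e)
  have s2: "FF x (2*N) + FF x (Suc (2*N)) = (harm (Suc (Suc (2*N))) - harm (Suc (2*N))) - ln (real (2*N) + x + 1) + ln (real (2*N) + x)"
    by (simp add: FF_def algebra_simps)
  have s3: "harm (Suc (Suc (2*N))) - harm (Suc (2*N)) = (1::real) / (2 * real (Suc N))"
    by (simp only: harm_Suc[of "Suc (2*N)"]) (simp add: field_simps)
  have s4: "ln (real (2*N) + x + 1) = ln 2 + ln ((x+1)/2 + real N)"
  proof -
    have e: "real (2*N) + x + 1 = 2 * ((x+1)/2 + real N)" by simp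
    show ?thesis unfolding e using x by (intro ln_mult_pos) (auto intro: add_pos_nonneg)
  qed
  have s5: "ln (real (2*N) + x) = ln 2 + ln (x/2 + real N)"
  proof -
    have e: "real (2*N) + x = 2 * (x/2 + real N)" by simp
    show ?thesis unfolding e using x by (intro ln_mult_pos) (auto intro: add_pos_nonneg)
  qed
  have s6: "ln (pochhammer ((x+1)/2) (Suc N)) = ln (pochhammer ((x+1)/2) N) + ln ((x+1)/2 + real N)"
    using p1 p2 by (simp add: pochhammer_Suc ln_mult_pos)
  have s7: "ln (pochhammer (x/2) (Suc N)) = ln (pochhammer (x/2) N) + ln (x/2 + real N)"
    using p1 p2 by (simp add: pochhammer_Suc ln_mult_pos)
  have s8: "harm (Suc N) / 2 = harm N / 2 + (1::real) / (2 * real (Suc N))"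
    by (simp add: harm_Suc field_simps)
  show ?case unfolding s1 s2 s3 s4 s5 s6 s7 s8 Suc.IH by simp
qed

lemma ln_GS: assumes z: "(z::real) > 0"
  shows "ln (Gamma_series z N) = ln (fact N) + z * ln (real N) - ln (pochhammer z N) - ln (z + real N)"
proof -
  have "pochhammer z N > 0" using z by (intro pochhammer_pos)
  moreover have "(fact N :: real) > 0" by simp
  ultimately show ?thesis using z
    by (simp add: Gamma_series_def ln_div ln_mult pochhammer_Suc del: fact_Suc)
qed

lemma FF_sums: assumes x: "x > 0"
  shows "FF x sums (euler_mascheroni / 2 + ln (Gamma ((x + 1) / 2) / Gamma (x / 2)))"
proof (rule even_sums[OF _ FF_tendsto[OF x]])
  define a where "a = x/2"
  define b where "b = (x+1)/2"
  have a: "a > 0" and b: "b > 0" using x by (auto simp: a_def b_def)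
  have ga: "Gamma a \<noteq> 0" using Gamma_real_pos[OF a] by linarith
  have gb: "Gamma b \<noteq> 0" using Gamma_real_pos[OF b] by linarith
  have eq: "sum (FF x) {..<2*N} = (harm N - ln (real N)) / 2 + (ln (Gamma_series b N) - ln (Gamma_series a N))
       + (ln (b + real N) - ln (a + real N))" for N
    unfolding FF_even[OF x] ln_GS[OF a] ln_GS[OF b] by (simp add: a_def b_def field_simps)
  have "(\<lambda>N. (harm N - ln (real N)) / 2 + (ln (Gamma_series b N) - ln (Gamma_series a N))
       + (ln (b + real N) - ln (a + real N))) \<longlonglongrightarrow> euler_mascheroni / 2 + (ln (Gamma b) - ln (Gamma a)) + 0"
    using ga gb by (intro tendsto_intros euler_mascheroni_LIMSEQ lim1) auto
  moreover have "ln (Gamma b) - ln (Gamma a) = ln (Gamma ((x + 1) / 2) / Gamma (x / 2))"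
    using Gamma_real_pos[OF a] Gamma_real_pos[OF b] unfolding a_def b_def by (simp add: ln_div)
  ultimately show "(\<lambda>N. sum (FF x) {..<2*N}) \<longlonglongrightarrow> euler_mascheroni / 2 + ln (Gamma ((x + 1) / 2) / Gamma (x / 2))"
    unfolding eq by simp
qed

lemma part1:
  fixes k :: nat assumes k: "k \<ge> 1"
  shows "(\<lambda>n. (-1) ^ Suc n * (harm (Suc n) - ln (root k (pochhammer (real (Suc n)) k)) - euler_mascheroni))
             sums (euler_mascheroni / 2 - ln pi / (2 * real k) + ln (Gamma ((real k + 1) / 2)) / real k)"
proof -
  have kpos: "real k > 0" using k by simp
  have sm: "(\<lambda>n. (\<Sum>j<k. FF (real j + 1) n) / real k) sums
      ((\<Sum>j<k. euler_mascheroni / 2 + ln (Gamma ((real j + 1 + 1) / 2) / Gamma ((real j + 1) / 2))) / real k)"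
    by (intro sums_divide sums_sum FF_sums) auto
  have teq: "(\<Sum>j<k. FF (real j + 1) n) / real k =
     (-1) ^ Suc n * (harm (Suc n) - ln (root k (pochhammer (real (Suc n)) k)) - euler_mascheroni)" for n
  proof -
    have "ln (pochhammer (real (Suc n)) k) = (\<Sum>j<k. ln (real (Suc n) + real j))"
      unfolding pochhammer_prod by (subst ln_prod) (auto simp: lessThan_atLeast0)
    hence "ln (root k (pochhammer (real (Suc n)) k)) = (\<Sum>j<k. ln (real (Suc n) + (real j + 1) - 1)) / real k"
      using k by (subst ln_root) (auto simp: add_ac)
    moreover have "(\<Sum>j<k. FF (real j + 1) n) = (-1)^Suc n * (real k * (harm (Suc n) - euler_mascheroni) - (\<Sum>j<k. ln (real (Suc n) + (real j + 1) - 1)))"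
      by (simp only: FF_def sum_distrib_left[symmetric]) (simp add: sum_subtractf sum.distrib algebra_simps)
    ultimately show ?thesis using kpos
      by (simp add: field_simps)
  qed
  have veq: "(\<Sum>j<k. euler_mascheroni / 2 + ln (Gamma ((real j + 1 + 1) / 2) / Gamma ((real j + 1) / 2))) / real k
     = euler_mascheroni / 2 - ln pi / (2 * real k) + ln (Gamma ((real k + 1) / 2)) / real k"
  proof -
    define G where "G j = ln (Gamma ((real j + 1) / 2))" for j :: nat
    have "(\<Sum>j<k. euler_mascheroni / 2 + ln (Gamma ((real j + 1 + 1) / 2) / Gamma ((real j + 1) / 2)))
        = (\<Sum>j<k. euler_mascheroni / 2 + (G (Suc j) - G j))"
    proof (intro sum.cong refl)
      fix j
      have p: "Gamma ((real j + 1 + 1) / 2) > 0" "Gamma ((real j + 1) / 2) > 0" by (auto intro!: Gamma_real_pos)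
      show "euler_mascheroni / 2 + ln (Gamma ((real j + 1 + 1) / 2) / Gamma ((real j + 1) / 2))
          = euler_mascheroni / 2 + (G (Suc j) - G j)" unfolding ln_divide_pos[OF p] G_def by simp
    qed
    also have "\<dots> = real k * euler_mascheroni / 2 + (G k - G 0)"
      by (simp add: sum.distrib sum_lessThan_telescope)
    also have "G 0 = ln pi / 2" by (simp add: G_def Gamma_one_half_real ln_sqrt)
    finally show ?thesis using kpos by (simp add: G_def field_simps)
  qed
  show ?thesis using sm unfolding teq veq .
qed

theorem mainTheorem11:
  shows "(\<forall>k::nat. k \<ge> 1 \<longrightarrow>
           (\<lambda>n. (-1) ^ Suc n * (harm (Suc n) - ln (root k (pochhammer (real (Suc n)) k)) - euler_mascheroni))
             sums (euler_mascheroni / 2 - ln pi / (2 * real k) + ln (Gamma ((real k + 1) / 2)) / real k))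
       \<and> (\<forall>x::real. x > 0 \<longrightarrow>
           (\<lambda>n. (-1) ^ Suc n * (harm (Suc n) - ln (real (Suc n) + x - 1) - euler_mascheroni))
             sums (euler_mascheroni / 2 + ln (Gamma ((x + 1) / 2) / Gamma (x / 2))))"
  using part1 FF_sums unfolding FF_def by blast

end
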